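(* Let $(A\to M,\rho,[\cdot,\cdot])$ be a Lie algebroid and $\nabla\colon\mathfrak X(M)\times\Gamma(A)\to\Gamma(A)$ a linear connection. Consider the 2-representation $(\nabla^{\rm bas},\nabla^{\rm bas},R^{\rm bas}_\nabla)$ of the Lie algebroid $A$ on the complex $\rho\colon A\to TM$, and the 2-representation $(\nabla,\nabla,R_\nabla)$ of the Lie algebroid $TM$ (anchor $\mathrm{Id}_{TM}$, Lie bracket of vector fields) on the complex $\mathrm{Id}_A\colon A\to A$. These two 2-representations form a matched pair, where in the definition of matched pair the first Lie algebroid is $A$, the second is $TM$, the common complex term is $C:=A$, $\partial_B:=\rho\colon A\to TM$ and $\partial_A:=\mathrm{Id}_A$.
   Context: $R_\nabla(X,Y)=\nabla_X\nabla_Y-\nabla_Y\nabla_X-\nabla_{[X,Y]}$. The basic connections are $\nabla^{\rm bas}_aX=[\rho(a),X]+\rho(\nabla_Xa)$ on $TM$ and $\nabla^{\rm bas}_{a_1}a_2=[a_1,a_2]+\nabla_{\rho(a_2)}a_1$ on $A$, and $R^{\rm bas}_\nabla\in\Omega^2(A,\mathrm{Hom}(TM,A))$ is $R^{\rm bas}_\nabla(a_1,a_2)X=-\nabla_X[a_1,a_2]+[\nabla_Xa_1,a_2]+[a_1,\nabla_Xa_2]+\nabla_{\nabla^{\rm bas}_{a_2}X}a_1-\nabla_{\nabla^{\rm bas}_{a_1}X}a_2$. Matched pair: Lie algebroids $A,B$ over $M$, a 2-representation $(\nabla^{AB},\nabla^{AC},R_A)$ of $A$ on $\partial_B\colon C\to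 B$ ($R_A\in\Omega^2(A,\mathrm{Hom}(B,C))$) and $(\nabla^{BA},\nabla^{BC},R_B)$ of $B$ on $\partial_A\colon C\to A$ ($R_B\in\Omega^2(B,\mathrm{Hom}(A,C))$). Writing $\nabla$ for all four connections, they form a matched pair if for all $a,a_i\in\Gamma(A)$, $b,b_i\in\Gamma(B)$, $c,c_i\in\Gamma(C)$: (M1) $\rho_A\partial_A=\rho_B\partial_B$; (M2) $\nabla_{\partial_Ac_1}c_2-\nabla_{\partial_Bc_2}c_1=-\nabla_{\partial_Ac_2}c_1+\nabla_{\partial_Bc_1}c_2$; (M3) $[a,\partial_Ac]=\partial_A(\nabla_ac)-\nabla_{\partial_Bc}a$; (M4) $[b,\partial_Bc]=\partial_B(\nabla_bc)-\nabla_{\partial_Ac}b$; (M5) $[\rho_A(a),\rho_B(b)]=\rho_B(\nabla_ab)-\rho_A(\nabla_ba)$; (M6) $\nabla_b\nabla_ac-\nabla_a\nabla_bc-\nabla_{\nabla_ba}c+\nabla_{\nabla_ab}c=R_B(b,\partial_Bc)a-R_A(a,\partial_Ac)b$; (M7) $\partial_A(R_A(a_1,a_2)b)=-\nabla_b[a_1,a_2]+[\nabla_ba_1,a_2]+[a_1,\nabla_ba_2]+\nabla_{\nabla_{a_2}b}a_1-\nabla_{\nabla_{a_1}b}a_2$; (M8) $\partial_B(R_B(b_1,b_2)a)=-\nabla_a[b_1,b_2]+[\nabla_ab_1,b_2]+[b_1,\nabla_ab_2]+\nabla_{\nabla_{b_2}a}b_1-\nabla_{\nabla_{b_1}a}b_2$;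 (M9) $\mathrm d_{\nabla^A}R_B=\mathrm d_{\nabla^B}R_A$, where $R_B$ is viewed in $\Omega^1(A,\wedge^2B^*\otimes C)$ via $a\mapsto((b_1,b_2)\mapsto R_B(b_1,b_2)a)$, $R_A$ in $\Omega^1(B,\wedge^2A^*\otimes C)$ likewise, $\nabla^A,\nabla^B$ the induced connections on $\wedge^2B^*\otimes C$, $\wedge^2A^*\otimes C$, and $\Omega^2(A,\wedge^2B^*\otimes C)\cong\Omega^2(B,\wedge^2A^*\otimes C)$ via $\omega(a_1,a_2)(b_1,b_2)=\omega'(b_1,b_2)(a_1,a_2)$. *)

theory Defs
  imports Main
begin

text \<open>Algebraic (Lie--Rinehart) model of Lie algebroids.
  The type 'r plays the role of the function ring C^\<infinity>(M);
  the type 'x the vector fields \<X>(M), acting on functions by vf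
  (vf X f = X(f)), with C^\<infinity>(M)-module structure sx and Lie bracket brX;
  a Lie algebroid A is given by its space of sections 'a, with
  module structure sa, bracket brA and anchor rho.\<close>

definition lie_algebroid ::
  "('x \<Rightarrow> 'r::comm_ring_1 \<Rightarrow> 'r) \<Rightarrow> ('r \<Rightarrow> 'x::ab_group_add \<Rightarrow> 'x) \<Rightarrow> ('x \<Rightarrow> 'x \<Rightarrow> 'x)
   \<Rightarrow> ('r \<Rightarrow> 'a::ab_group_add \<Rightarrow> 'a) \<Rightarrow> ('a \<Rightarrow> 'a \<Rightarrow> 'a) \<Rightarrow> ('a \<Rightarrow> 'x) \<Rightarrow> bool" where
  "lie_algebroid vf sx brX sa brA rho \<longleftrightarrow>
     \<comment> \<open>module structure of the sections over the function ring\<close>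
     (\<forall>f g a. sa (f + g) a = sa f a + sa g a) \<and>
     (\<forall>f a b. sa f (a + b) = sa f a + sa f b) \<and>
     (\<forall>f g a. sa (f * g) a = sa f (sa g a)) \<and>
     (\<forall>a. sa 1 a = a) \<and>
     \<comment> \<open>Lie bracket: bi-additive, skew, Jacobi\<close>
     (\<forall>a b c. brA (a + b) c = brA a c + brA b c) \<and>
     (\<forall>a b c. brA a (b + c) = brA a b + brA a c) \<and>
     (\<forall>a b. brA a b = - brA b a) \<and>
     (\<forall>a b c. brA a (brA b c) + brA b (brA c a) + brA c (brA a b) = 0) \<and>
     \<comment> \<open>anchor: C^\<infinity>(M)-linear bundle map, bracket preserving\<close>
     (\<forall>a b. rho (a + b) = rho a + rho b) \<and>
     (\<forall>f a. rho (sa f a) = sx f (rho a)) \<and>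
     (\<forall>a b. rho (brA a b) = brX (rho a) (rho b)) \<and>
     \<comment> \<open>Leibniz rule\<close>
     (\<forall>a b f. brA a (sa f b) = sa f (brA a b) + sa (vf (rho a) f) b)"

definition vector_fields ::
  "('x \<Rightarrow> 'r::comm_ring_1 \<Rightarrow> 'r) \<Rightarrow> ('r \<Rightarrow> 'x::ab_group_add \<Rightarrow> 'x) \<Rightarrow> ('x \<Rightarrow> 'x \<Rightarrow> 'x) \<Rightarrow> bool" where
  "vector_fields vf sx brX \<longleftrightarrow>
     (\<forall>X f g. vf X (f + g) = vf X f + vf X g) \<and>
     (\<forall>X f g. vf X (f * g) = f * vf X g + vf X f * g) \<and>
     (\<forall>X Y f. vf (X + Y) f = vf X f + vf Y f) \<and>
     (\<forall>X g f. vf (sx g X) f = g * vf X f) \<and>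
     (\<forall>X Y f. vf (brX X Y) f = vf X (vf Y f) - vf Y (vf X f)) \<and>
     lie_algebroid vf sx brX sx brX id"

definition connection ::
  "('x \<Rightarrow> 'r::comm_ring_1 \<Rightarrow> 'r) \<Rightarrow> ('r \<Rightarrow> 'x::ab_group_add \<Rightarrow> 'x) \<Rightarrow> ('r \<Rightarrow> 'a::ab_group_add \<Rightarrow> 'a)
   \<Rightarrow> ('x \<Rightarrow> 'a \<Rightarrow> 'a) \<Rightarrow> bool" where
  "connection vf sx sa nabla \<longleftrightarrow>
     (\<forall>X Y a. nabla (X + Y) a = nabla X a + nabla Y a) \<and>
     (\<forall>f X a. nabla (sx f X) a = sa f (nabla X a)) \<and>
     (\<forall>X a b. nabla X (a + b) = nabla X a + nabla X b) \<and>
     (\<forall>X f a. nabla X (sa f a) = sa f (nabla X a) + sa (vf X f) a)"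

definition curv :: "('x \<Rightarrow> 'x \<Rightarrow> 'x) \<Rightarrow> ('x \<Rightarrow> 'a::ab_group_add \<Rightarrow> 'a) \<Rightarrow> 'x \<Rightarrow> 'x \<Rightarrow> 'a \<Rightarrow> 'a" where
  "curv brX nabla X Y a = nabla X (nabla Y a) - nabla Y (nabla X a) - nabla (brX X Y) a"

definition bas_TM :: "('x::ab_group_add \<Rightarrow> 'x \<Rightarrow> 'x) \<Rightarrow> ('a \<Rightarrow> 'x) \<Rightarrow> ('x \<Rightarrow> 'a \<Rightarrow> 'a) \<Rightarrow> 'a \<Rightarrow> 'x \<Rightarrow> 'x" where
  "bas_TM brX rho nabla a X = brX (rho a) X + rho (nabla X a)"

definition bas_A :: "('a::ab_group_add \<Rightarrow> 'a \<Rightarrow> 'a) \<Rightarrow> ('a \<Rightarrow> 'x) \<Rightarrow> ('x \<Rightarrow> 'a \<Rightarrow> 'a) \<Rightarrow> 'a \<Rightarrow> 'a \<Rightarrow> 'a" where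
  "bas_A brA rho nabla a1 a2 = brA a1 a2 + nabla (rho a2) a1"

definition curv_bas ::
  "('x::ab_group_add \<Rightarrow> 'x \<Rightarrow> 'x) \<Rightarrow> ('a::ab_group_add \<Rightarrow> 'a \<Rightarrow> 'a) \<Rightarrow> ('a \<Rightarrow> 'x) \<Rightarrow> ('x \<Rightarrow> 'a \<Rightarrow> 'a)
   \<Rightarrow> 'a \<Rightarrow> 'a \<Rightarrow> 'x \<Rightarrow> 'a" where
  "curv_bas brX brA rho nabla a1 a2 X =
     - nabla X (brA a1 a2) + brA (nabla X a1) a2 + brA a1 (nabla X a2)
     + nabla (bas_TM brX rho nabla a2 X) a1 - nabla (bas_TM brX rho nabla a1 X) a2"

text \<open>Matched pair conditions (M1)--(M9) for a 2-representation
  (nAB, nAC, RA) of A on dB : C \<rightarrow> B and (nBA, nBC, RB) of B on dA : C \<rightarrow> A.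
  (M9) is written out pointwise, evaluated at (a1,a2) and (b1,b2), using the
  exterior covariant derivative of 1-forms and the induced connections on
  \<wedge>^2 B^* \<otimes> C, resp. \<wedge>^2 A^* \<otimes> C.\<close>

definition matched_pair ::
  "('x::ab_group_add \<Rightarrow> 'x \<Rightarrow> 'x)
   \<Rightarrow> ('a::ab_group_add \<Rightarrow> 'a \<Rightarrow> 'a) \<Rightarrow> ('a \<Rightarrow> 'x)
   \<Rightarrow> ('b::ab_group_add \<Rightarrow> 'b \<Rightarrow> 'b) \<Rightarrow> ('b \<Rightarrow> 'x)
   \<Rightarrow> ('c::ab_group_add \<Rightarrow> 'a) \<Rightarrow> ('c \<Rightarrow> 'b)
   \<Rightarrow> ('a \<Rightarrow> 'b \<Rightarrow> 'b) \<Rightarrow> ('a \<Rightarrow> 'c \<Rightarrow> 'c) \<Rightarrow> ('a \<Rightarrow> 'a \<Rightarrow> 'b \<Rightarrow> 'c)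
   \<Rightarrow> ('b \<Rightarrow> 'a \<Rightarrow> 'a) \<Rightarrow> ('b \<Rightarrow> 'c \<Rightarrow> 'c) \<Rightarrow> ('b \<Rightarrow> 'b \<Rightarrow> 'a \<Rightarrow> 'c) \<Rightarrow> bool" where
  "matched_pair brX brA rhoA brB rhoB dA dB nAB nAC RA nBA nBC RB \<longleftrightarrow>
     \<comment> \<open>(M1)\<close>
     (\<forall>c. rhoA (dA c) = rhoB (dB c)) \<and>
     \<comment> \<open>(M2)\<close>
     (\<forall>c1 c2. nAC (dA c1) c2 - nBC (dB c2) c1 = - nAC (dA c2) c1 + nBC (dB c1) c2) \<and>
     \<comment> \<open>(M3)\<close>
     (\<forall>a c. brA a (dA c) = dA (nAC a c) - nBA (dB c) a) \<and>
     \<comment> \<open>(M4)\<close>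
     (\<forall>b c. brB b (dB c) = dB (nBC b c) - nAB (dA c) b) \<and>
     \<comment> \<open>(M5)\<close>
     (\<forall>a b. brX (rhoA a) (rhoB b) = rhoB (nAB a b) - rhoA (nBA b a)) \<and>
     \<comment> \<open>(M6)\<close>
     (\<forall>a b c. nBC b (nAC a c) - nAC a (nBC b c) - nAC (nBA b a) c + nBC (nAB a b) c
              = RB b (dB c) a - RA a (dA c) b) \<and>
     \<comment> \<open>(M7)\<close>
     (\<forall>a1 a2 b. dA (RA a1 a2 b) =
        - nBA b (brA a1 a2) + brA (nBA b a1) a2 + brA a1 (nBA b a2)
        + nBA (nAB a2 b) a1 - nBA (nAB a1 b) a2) \<and>
     \<comment> \<open>(M8)\<close>
     (\<forall>b1 b2 a. dB (RB b1 b2 a) =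
        - nAB a (brB b1 b2) + brB (nAB a b1) b2 + brB b1 (nAB a b2)
        + nAB (nBA b2 a) b1 - nAB (nBA b1 a) b2) \<and>
     \<comment> \<open>(M9)\<close>
     (\<forall>a1 a2 b1 b2.
        (nAC a1 (RB b1 b2 a2) - RB (nAB a1 b1) b2 a2 - RB b1 (nAB a1 b2) a2)
        - (nAC a2 (RB b1 b2 a1) - RB (nAB a2 b1) b2 a1 - RB b1 (nAB a2 b2) a1)
        - RB b1 b2 (brA a1 a2)
      = (nBC b1 (RA a1 a2 b2) - RA (nBA b1 a1) a2 b2 - RA a1 (nBA b1 a2) b2)
        - (nBC b2 (RA a1 a2 b1) - RA (nBA b2 a1) a2 b1 - RA a1 (nBA b2 a2) b1)
        - RA a1 a2 (brB b1 b2))"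

end

theory Submission
  imports Defs
begin

theorem mainTheorem3:
  fixes vf :: "'x::ab_group_add \<Rightarrow> 'r::comm_ring_1 \<Rightarrow> 'r"
    and sx :: "'r \<Rightarrow> 'x \<Rightarrow> 'x"
    and brX :: "'x \<Rightarrow> 'x \<Rightarrow> 'x"
    and sa :: "'r \<Rightarrow> 'a::ab_group_add \<Rightarrow> 'a"
    and brA :: "'a \<Rightarrow> 'a \<Rightarrow> 'a"
    and rho :: "'a \<Rightarrow> 'x"
    and nabla :: "'x \<Rightarrow> 'a \<Rightarrow> 'a"
  assumes "vector_fields vf sx brX"
    and "lie_algebroid vf sx brX sa brA rho"
    and "connection vf sx sa nabla"
  shows "matched_pair brX brA rho brX id id rho
           (bas_TM brX rho nabla) (bas_A brA rho nabla) (curv_bas brX brA rho nabla)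
           nabla nabla (curv brX nabla)"
proof -
  have LX: "lie_algebroid vf sx brX sx brX id" using assms(1) unfolding vector_fields_def by blast
  note LA = assms(2)[unfolded lie_algebroid_def]
  note LX' = LX[unfolded lie_algebroid_def]
  note C = assms(3)[unfolded connection_def]
  have nXa: "\<And>X Y a. nabla (X + Y) a = nabla X a + nabla Y a" using C by blast
  have naa: "\<And>X a b. nabla X (a + b) = nabla X a + nabla X b" using C by blast
  have bAl: "\<And>a b c. brA (a + b) c = brA a c + brA b c" using LA by blast
  have bAr: "\<And>a b c. brA a (b + c) = brA a b + brA a c" using LA by blast
  have bAs: "\<And>a b. brA a b = - brA b a" using LA by blast
  have bXl: "\<And>a b c. brX (a + b) c = brX a c + brX b c" using LX' by blast
  have bXr: "\<And>a b c. brX a (b + c) = brX a b + brX a c" using LX' by blast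
  have bXs: "\<And>a b. brX a b = - brX b a" using LX' by blast
  have bXj: "\<And>a b c. brX a (brX b c) + brX b (brX c a) + brX c (brX a b) = 0" using LX' by blast
  have rA: "\<And>a b. rho (a + b) = rho a + rho b" using LA by blast
  have rB: "\<And>a b. rho (brA a b) = brX (rho a) (rho b)" using LA by blast
  have nX0: "\<And>a. nabla 0 a = 0" using nXa[of 0 0] by simp
  have nXn: "\<And>X a. nabla (-X) a = - nabla X a" using nXa[of X "-X" for X] nX0 by (metis add.right_inverse add_eq_0_iff)
  have nXd: "\<And>X Y a. nabla (X - Y) a = nabla X a - nabla Y a" by (metis diff_conv_add_uminus nXa nXn)
  have na0: "\<And>X. nabla X 0 = 0" using naa[of _ 0 0] by simp
  have nan: "\<And>X a. nabla X (-a) = - nabla X a" using naa na0 by (metis add.right_inverse add_eq_0_iff)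
  have nad: "\<And>X a b. nabla X (a - b) = nabla X a - nabla X b" by (metis diff_conv_add_uminus naa nan)
  have bAl0: "\<And>a. brA 0 a = 0" using bAl[of 0 0] by simp
  have bAln: "\<And>a b. brA (-a) b = - brA a b" using bAl bAl0 by (metis add.right_inverse add_eq_0_iff)
  have bAld: "\<And>a b c. brA (a - b) c = brA a c - brA b c" by (metis diff_conv_add_uminus bAl bAln)
  have bAr0: "\<And>a. brA a 0 = 0" using bAr[of _ 0 0] by simp
  have bArn: "\<And>a b. brA a (-b) = - brA a b" using bAr bAr0 by (metis add.right_inverse add_eq_0_iff)
  have bArd: "\<And>a b c. brA a (b - c) = brA a b - brA a c" by (metis diff_conv_add_uminus bAr bArn)
  have bXl0: "\<And>a. brX 0 a = 0" using bXl[of 0 0] by simp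
  have bXln: "\<And>a b. brX (-a) b = - brX a b" using bXl bXl0 by (metis add.right_inverse add_eq_0_iff)
  have bXld: "\<And>a b c. brX (a - b) c = brX a c - brX b c" by (metis diff_conv_add_uminus bXl bXln)
  have bXr0: "\<And>a. brX a 0 = 0" using bXr[of _ 0 0] by simp
  have bXrn: "\<And>a b. brX a (-b) = - brX a b" using bXr bXr0 by (metis add.right_inverse add_eq_0_iff)
  have bXrd: "\<And>a b c. brX a (b - c) = brX a b - brX a c" by (metis diff_conv_add_uminus bXr bXrn)
  have bXJ: "\<And>x b1 b2. brX x (brX b1 b2) = brX b1 (brX x b2) + brX (brX x b1) b2"
  proof -
    fix x b1 b2
    have "brX x (brX b1 b2) + brX b1 (brX b2 x) + brX b2 (brX x b1) = 0" by (rule bXj)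
    moreover have "brX b1 (brX b2 x) = - brX b1 (brX x b2)" by (simp add: bXs[of b2 x] bXrn)
    moreover have "brX b2 (brX x b1) = - brX (brX x b1) b2" by (rule bXs)
    ultimately show "brX x (brX b1 b2) = brX b1 (brX x b2) + brX (brX x b1) b2"
      by (simp add: algebra_simps)
  qed
  have r0: "rho 0 = 0" using rA[of 0 0] by simp
  have rn: "\<And>a. rho (-a) = - rho a" using rA r0 by (metis add.right_inverse add_eq_0_iff)
  have rd: "\<And>a b. rho (a - b) = rho a - rho b" by (metis diff_conv_add_uminus rA rn)
  note lin = nXa naa bAl bAr bXl bXr rA rB nX0 nXn nXd na0 nan nad bAl0 bAln bAld bAr0 bArn bArd
     bXl0 bXln bXld bXr0 bXrn bXrd r0 rn rd
  note defs = curv_def bas_TM_def bas_A_def curv_bas_def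
  show ?thesis
    unfolding matched_pair_def
  proof (intro conjI allI)
    fix c :: 'a
    show "rho (id c) = id (rho c)" by simp
  next
    fix c1 c2 :: 'a
    show "bas_A brA rho nabla (id c1) c2 - nabla (rho c2) c1 = - bas_A brA rho nabla (id c2) c1 + nabla (rho c1) c2"
      using bAs[of c1 c2] by (simp add: defs)
  next
    fix a c :: 'a
    show "brA a (id c) = id (bas_A brA rho nabla a c) - nabla (rho c) a" by (simp add: defs)
  next
    fix b :: 'x and c :: 'a
    show "brX b (rho c) = rho (nabla b c) - bas_TM brX rho nabla (id c) b"
      using bXs[of b "rho c"] by (simp add: defs)
  next
    fix a :: 'a and b :: 'x
    show "brX (rho a) (id b) = id (bas_TM brX rho nabla a b) - rho (nabla b a)" by (simp add: defs)
  next
    fix a :: 'a and b :: 'x and c :: 'a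
    show "nabla b (bas_A brA rho nabla a c) - bas_A brA rho nabla a (nabla b c) - bas_A brA rho nabla (nabla b a) c +
           nabla (bas_TM brX rho nabla a b) c = curv brX nabla b (rho c) a - curv_bas brX brA rho nabla a (id c) b"
      using bXs[of b "rho c"] by (simp add: defs lin algebra_simps)
  next
    fix a1 a2 :: 'a and b :: 'x
    show "id (curv_bas brX brA rho nabla a1 a2 b) = - nabla b (brA a1 a2) + brA (nabla b a1) a2 + brA a1 (nabla b a2) +
           nabla (bas_TM brX rho nabla a2 b) a1 - nabla (bas_TM brX rho nabla a1 b) a2"
      by (simp add: defs)
  next
    fix b1 b2 :: 'x and a :: 'a
    show "rho (curv brX nabla b1 b2 a) =
           - bas_TM brX rho nabla a (brX b1 b2) + brX (bas_TM brX rho nabla a b1) b2 + brX b1 (bas_TM brX rho nabla a b2) +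
           bas_TM brX rho nabla (nabla b2 a) b1 - bas_TM brX rho nabla (nabla b1 a) b2"
      using bXs[of b1 "rho (nabla b2 a)"] bXj[of "rho a" b1 b2] bXs[of b2 "brX (rho a) b1"] bXs[of b2 "rho a"]
      by (simp add: defs lin algebra_simps)
  next
    fix a1 a2 :: 'a and b1 b2 :: 'x
    let ?nAC="bas_A brA rho nabla" and ?RB="curv brX nabla" and ?nAB="bas_TM brX rho nabla" and ?nBA=nabla and ?nBC=nabla
      and ?RA="curv_bas brX brA rho nabla" and ?brB=brX
    show "(?nAC a1 (?RB b1 b2 a2) - ?RB (?nAB a1 b1) b2 a2 - ?RB b1 (?nAB a1 b2) a2)
        - (?nAC a2 (?RB b1 b2 a1) - ?RB (?nAB a2 b1) b2 a1 - ?RB b1 (?nAB a2 b2) a1)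
        - ?RB b1 b2 (brA a1 a2)
      = (?nBC b1 (?RA a1 a2 b2) - ?RA (?nBA b1 a1) a2 b2 - ?RA a1 (?nBA b1 a2) b2)
        - (?nBC b2 (?RA a1 a2 b1) - ?RA (?nBA b2 a1) a2 b1 - ?RA a1 (?nBA b2 a2) b1)
        - ?RA a1 a2 (?brB b1 b2)"
      using bAs[of a2 "nabla b2 (nabla b1 a1)"] bAs[of a2 "nabla (brX b1 b2) a1"] bAs[of a2 "nabla b1 (nabla b2 a1)"]
        bXs[of b1 "rho (nabla b2 a1)"] bXs[of b1 "rho (nabla b2 a2)"]
        bXJ[of "rho a1" b1 b2] bXJ[of "rho a2" b1 b2]
      by (simp add: defs lin algebra_simps)
  qed
qed

end
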